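(* Let $P$ be an infinite field and $W(X)$ the free associative (unital) algebra over $P$ on a finite set $X=\{x_1,\ldots,x_n\}$. Let $\mu:W(X)\to W(X)$ be a bijection generating an automorphism $\tau$ of the semigroup $\mathrm{End}(W(X))$ (i.e. $\tau(s)=\mu s\mu^{-1}$ for all $s$), such that $\mu(a)=a$ for all $a\in P$ and $\mu(x_i)=x_i$ for all $i$. Then either $\mu(uv)=\mu(u)\mu(v)$ for all $u,v\in W(X)$, or $\mu(uv)=\mu(v)\mu(u)$ for all $u,v\in W(X)$.
   Context: $\mathrm{End}(W(X))$ is the semigroup of all $P$-algebra endomorphisms of $W(X)$. *)

theory Defs
  imports Main
begin

text \<open>The free associative unital algebra W(X) over a field 'a on X = {x_0,...,x_(n-1)}
  is modelled as finitely supported functions from words (lists of indices < n) to 'a.\<close>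

type_synonym 'a walg = "nat list \<Rightarrow> 'a"

definition W :: "nat \<Rightarrow> ('a::field) walg set" where
  "W n = {f. finite {w. f w \<noteq> 0} \<and> (\<forall>w. f w \<noteq> 0 \<longrightarrow> set w \<subseteq> {..<n})}"

definition wadd :: "('a::field) walg \<Rightarrow> 'a walg \<Rightarrow> 'a walg" where
  "wadd f g = (\<lambda>w. f w + g w)"

definition wsmult :: "'a::field \<Rightarrow> 'a walg \<Rightarrow> 'a walg" where
  "wsmult c f = (\<lambda>w. c * f w)"

definition wmult :: "('a::field) walg \<Rightarrow> 'a walg \<Rightarrow> 'a walg" where
  "wmult f g = (\<lambda>w. \<Sum>k\<le>length w. f (take k w) * g (drop k w))"

definition wconst :: "'a::field \<Rightarrow> 'a walg" where
  "wconst a = (\<lambda>w. if w = [] then a else 0)"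

definition wvar :: "nat \<Rightarrow> ('a::field) walg" where
  "wvar i = (\<lambda>w. if w = [i] then 1 else 0)"

definition WEnd :: "nat \<Rightarrow> (('a::field) walg \<Rightarrow> 'a walg) set" where
  "WEnd n = {s. (\<forall>f\<in>W n. s f \<in> W n)
     \<and> (\<forall>f\<in>W n. \<forall>g\<in>W n. s (wadd f g) = wadd (s f) (s g))
     \<and> (\<forall>c. \<forall>f\<in>W n. s (wsmult c f) = wsmult c (s f))
     \<and> (\<forall>f\<in>W n. \<forall>g\<in>W n. s (wmult f g) = wmult (s f) (s g))
     \<and> s (wconst 1) = wconst 1}"

end

theory Submission imports Defs "HOL-Computational_Algebra.Polynomial" begin

definition wsum :: "'b set \<Rightarrow> ('b \<Rightarrow> ('a::field) walg) \<Rightarrow> 'a walg" where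
  "wsum S F = (\<lambda>w. \<Sum>i\<in>S. F i w)"

definition ew :: "nat list \<Rightarrow> ('a::field) walg" where
  "ew v = (\<lambda>w. if w = v then 1 else 0)"

definition supp :: "('a::field) walg \<Rightarrow> nat list set" where
  "supp f = {w. f w \<noteq> 0}"

definition spl :: "nat list \<Rightarrow> (nat list \<times> nat list) set" where
  "spl x = {(a,b). a @ b = x}"

lemma spl_eq: "spl x = (\<lambda>k. (take k x, drop k x)) ` {..length x}"
proof
  show "spl x \<subseteq> (\<lambda>k. (take k x, drop k x)) ` {..length x}"
  proof
    fix p assume "p \<in> spl x"
    then obtain a b where p: "p = (a,b)" "a @ b = x" by (auto simp: spl_def)
    then show "p \<in> (\<lambda>k. (take k x, drop k x)) ` {..length x}"
      by (intro image_eqI[where x="length a"]) auto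
  qed
qed (auto simp: spl_def)

lemma finite_spl[simp]: "finite (spl x)"
  by (simp add: spl_eq)

lemma wmult_spl: "wmult f g x = (\<Sum>p\<in>spl x. f (fst p) * g (snd p))"
proof -
  have inj: "inj_on (\<lambda>k. (take k x, drop k x)) {..length x}"
    by (rule inj_onI) (metis (no_types, lifting) Pair_inject atMost_iff length_take min.absorb2)
  show ?thesis
    unfolding spl_eq wmult_def by (simp add: sum.reindex[OF inj])
qed

lemma wmult_assoc: "wmult (wmult f g) h = wmult f (wmult g h)"
proof
  fix x
  have "wmult (wmult f g) h x = (\<Sum>p\<in>spl x. \<Sum>q\<in>spl (fst p). f (fst q) * g (snd q) * h (snd p))"
    by (simp add: wmult_spl sum_distrib_right)
  also have "\<dots> = (\<Sum>pq\<in>Sigma (spl x) (\<lambda>p. spl (fst p)). f (fst (snd pq)) * g (snd (snd pq)) * h (snd (fst pq)))"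
    by (subst sum.Sigma) (auto simp: case_prod_beta)
  also have "\<dots> = (\<Sum>t\<in>{(a,b,c). a @ b @ c = x}. f (fst t) * g (fst (snd t)) * h (snd (snd t)))"
    by (rule sum.reindex_bij_witness[where i="\<lambda>(a,b,c). ((a@b,c),(a,b))" and j="\<lambda>((p,c),(a,b)). (a,b,c)"])
       (auto simp: spl_def)
  also have "\<dots> = (\<Sum>pq\<in>Sigma (spl x) (\<lambda>p. spl (snd p)). f (fst (fst pq)) * g (fst (snd pq)) * h (snd (snd pq)))"
    by (rule sum.reindex_bij_witness[where j="\<lambda>(a,b,c). ((a,b@c),(b,c))" and i="\<lambda>((a,q),(b,c)). (a,b,c)"])
       (auto simp: spl_def)
  also have "\<dots> = (\<Sum>p\<in>spl x. \<Sum>q\<in>spl (snd p). f (fst p) * (g (fst q) * h (snd q)))"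
    by (subst sum.Sigma) (auto simp: mult.assoc case_prod_beta)
  also have "\<dots> = wmult f (wmult g h) x"
    by (simp add: wmult_spl sum_distrib_left)
  finally show "wmult (wmult f g) h x = wmult f (wmult g h) x" .
qed


lemma wmult_ew: "wmult (ew v) (ew w) = ew (v @ w)"
proof
  fix x
  have "wmult (ew v) (ew w) x = (\<Sum>p\<in>spl x. if p = (v, w) then 1 else 0)"
    unfolding wmult_spl ew_def by (intro sum.cong) auto
  also have "\<dots> = ew (v @ w) x"
    by (subst sum.delta[OF finite_spl]) (auto simp: ew_def spl_def)
  finally show "wmult (ew v) (ew w) x = ew (v @ w) x" .
qed

lemma wmult_wsum_left: "wmult (wsum S F) g = wsum S (\<lambda>i. wmult (F i) g)"
  unfolding wmult_def wsum_def by (auto simp: sum_distrib_right intro!: ext sum.swap)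

lemma wmult_wsum_right: "wmult g (wsum S F) = wsum S (\<lambda>i. wmult g (F i))"
  unfolding wmult_def wsum_def by (auto simp: sum_distrib_left intro!: ext sum.swap)

lemma wmult_smult_left: "wmult (wsmult c f) g = wsmult c (wmult f g)"
  unfolding wmult_def wsmult_def by (auto simp: sum_distrib_left mult.assoc intro!: ext)

lemma wmult_smult_right: "wmult f (wsmult c g) = wsmult c (wmult f g)"
  unfolding wmult_def wsmult_def by (auto simp: sum_distrib_left mult.left_commute intro!: ext)

lemma wmult_add_left: "wmult (wadd f g) h = wadd (wmult f h) (wmult g h)"
  unfolding wmult_def wadd_def by (auto simp: distrib_right sum.distrib intro!: ext)

lemma wmult_add_right: "wmult h (wadd f g) = wadd (wmult h f) (wmult h g)"
  unfolding wmult_def wadd_def by (auto simp: distrib_left sum.distrib intro!: ext)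

lemma wconst_ew: "wconst a = wsmult a (ew [])"
  by (auto simp: wconst_def wsmult_def ew_def)

lemma wvar_ew: "wvar i = ew [i]"
  by (auto simp: wvar_def ew_def)

lemma wconst1: "wconst 1 = ew []"
  by (auto simp: wconst_def ew_def)

lemma wmult_one_left: "wmult (wconst 1) f = f"
proof
  fix x
  have "wmult (wconst 1) f x = (\<Sum>k\<le>length x. if k = 0 then f x else 0)"
    unfolding wmult_def wconst_def by (intro sum.cong) auto
  then show "wmult (wconst 1) f x = f x" by simp
qed

lemma wmult_one_right: "wmult f (wconst 1) = f"
proof
  fix x
  have "wmult f (wconst 1) x = (\<Sum>k\<le>length x. if k = length x then f x else 0)"
    unfolding wmult_def wconst_def by (intro sum.cong) auto
  then show "wmult f (wconst 1) x = f x" by simp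
qed

lemma wsmult_1[simp]: "wsmult 1 f = f" by (simp add: wsmult_def)
lemma wsmult_0_fun: "wsmult 0 f = (\<lambda>_. 0)" by (simp add: wsmult_def)
lemma wsmult_smult: "wsmult a (wsmult b f) = wsmult (a*b) f" by (simp add: wsmult_def mult.assoc)

lemma wsum_empty[simp]: "wsum {} F = (\<lambda>_. 0)" by (simp add: wsum_def)
lemma wsum_insert: "finite S \<Longrightarrow> i \<notin> S \<Longrightarrow> wsum (insert i S) F = wadd (F i) (wsum S F)"
  by (simp add: wsum_def wadd_def)

lemma wsum_cartesian: "wsum (A \<times> B) (\<lambda>p. F (fst p) (snd p)) = wsum A (\<lambda>a. wsum B (\<lambda>b. F a b))"
  unfolding wsum_def by (auto intro!: ext simp: sum.cartesian_product case_prod_beta)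

lemma wsum_swap: "wsum A (\<lambda>a. wsum B (\<lambda>b. F a b)) = wsum B (\<lambda>b. wsum A (\<lambda>a. F a b))"
  unfolding wsum_def by (auto intro!: ext sum.swap)

lemma wsum_cong: "(\<And>i. i \<in> S \<Longrightarrow> F i = G i) \<Longrightarrow> wsum S F = wsum S G"
  unfolding wsum_def by (auto intro!: ext sum.cong)

lemma wsmult_wsum: "wsmult c (wsum S F) = wsum S (\<lambda>i. wsmult c (F i))"
  unfolding wsum_def wsmult_def by (auto intro!: ext simp: sum_distrib_left)

lemma expansion:
  assumes "finite S" "supp f \<subseteq> S"
  shows "f = wsum S (\<lambda>w. wsmult (f w) (ew w))"
proof
  fix x
  have "wsum S (\<lambda>w. wsmult (f w) (ew w)) x = (\<Sum>w\<in>S. if x = w then f w else 0)"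
    unfolding wsum_def wsmult_def ew_def by (intro sum.cong) auto
  also have "\<dots> = f x" using assms by (auto simp: supp_def)
  finally show "f x = wsum S (\<lambda>w. wsmult (f w) (ew w)) x" by simp
qed

lemma W_iff: "f \<in> W n \<longleftrightarrow> finite (supp f) \<and> (\<forall>w\<in>supp f. set w \<subseteq> {..<n})"
  by (auto simp: W_def supp_def)

lemma W_zero: "(\<lambda>_. 0) \<in> W n" by (simp add: W_def)

lemma W_add: "f \<in> W n \<Longrightarrow> g \<in> W n \<Longrightarrow> wadd f g \<in> W n"
proof -
  assume f: "f \<in> W n" and g: "g \<in> W n"
  have "supp (wadd f g) \<subseteq> supp f \<union> supp g" by (auto simp: supp_def wadd_def)
  then show ?thesis using f g unfolding W_iff by (meson UnE finite_Un rev_finite_subset subsetD)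
qed

lemma W_smult: "f \<in> W n \<Longrightarrow> wsmult c f \<in> W n"
proof -
  assume f: "f \<in> W n"
  have "supp (wsmult c f) \<subseteq> supp f" by (auto simp: supp_def wsmult_def)
  then show ?thesis using f unfolding W_iff by (meson rev_finite_subset subsetD)
qed

lemma W_wsum: "finite S \<Longrightarrow> (\<And>i. i \<in> S \<Longrightarrow> F i \<in> W n) \<Longrightarrow> wsum S F \<in> W n"
  by (induction S rule: finite_induct) (auto simp: W_zero wsum_insert W_add)

lemma W_ew: "set w \<subseteq> {..<n} \<Longrightarrow> ew w \<in> W n"
  by (auto simp: W_def ew_def)

lemma supp_ew: "supp (ew w) = {w}" by (auto simp: supp_def ew_def)

lemma wmult_expand:
  assumes "finite (supp f)" "finite (supp g)"
  shows "wmult f g = wsum (supp f \<times> supp g) (\<lambda>p. wsmult (f (fst p) * g (snd p)) (ew (fst p @ snd p)))"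
proof -
  have "wmult f g = wmult (wsum (supp f) (\<lambda>w. wsmult (f w) (ew w))) (wsum (supp g) (\<lambda>w. wsmult (g w) (ew w)))"
    using expansion[OF assms(1) order_refl] expansion[OF assms(2) order_refl] by simp
  also have "\<dots> = wsum (supp f) (\<lambda>a. wsum (supp g) (\<lambda>b. wsmult (f a * g b) (ew (a @ b))))"
    by (subst wsum_swap) (simp add: wmult_wsum_left wmult_wsum_right wmult_smult_left wmult_smult_right wmult_ew wsmult_smult mult.commute wsmult_wsum)
  also have "\<dots> = wsum (supp f \<times> supp g) (\<lambda>p. wsmult (f (fst p) * g (snd p)) (ew (fst p @ snd p)))"
    by (rule wsum_cartesian[symmetric, where F="\<lambda>a b. wsmult (f a * g b) (ew (a @ b))"])
  finally show ?thesis .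
qed

lemma W_mult: "f \<in> W n \<Longrightarrow> g \<in> W n \<Longrightarrow> wmult f g \<in> W n"
proof -
  assume f: "f \<in> W n" and g: "g \<in> W n"
  then have ff: "finite (supp f)" "finite (supp g)" by (auto simp: W_iff)
  show ?thesis unfolding wmult_expand[OF ff]
  proof (rule W_wsum)
    fix p assume p: "p \<in> supp f \<times> supp g"
    have "set (fst p @ snd p) \<subseteq> {..<n}" using p f g by (auto simp: W_iff)
    then show "wsmult (f (fst p) * g (snd p)) (ew (fst p @ snd p)) \<in> W n" by (intro W_smult W_ew)
  qed (use ff in auto)
qed

lemma W_const: "wconst a \<in> W n" by (simp add: wconst_ew W_smult W_ew)
lemma W_var: "i < n \<Longrightarrow> wvar i \<in> W n" by (simp add: wvar_ew W_ew)


lemma fin_add: "finite (supp f) \<Longrightarrow> finite (supp g) \<Longrightarrow> finite (supp (wadd f g))"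
  by (rule finite_subset[of _ "supp f \<union> supp g"]) (auto simp: supp_def wadd_def)
lemma fin_smult: "finite (supp f) \<Longrightarrow> finite (supp (wsmult c f))"
  by (rule finite_subset[of _ "supp f"]) (auto simp: supp_def wsmult_def)
lemma fin_zero: "finite (supp (\<lambda>_. 0))" by (simp add: supp_def)
lemma fin_wsum: "finite S \<Longrightarrow> (\<And>i. i \<in> S \<Longrightarrow> finite (supp (F i))) \<Longrightarrow> finite (supp (wsum S F))"
  by (induction S rule: finite_induct) (auto simp: fin_zero wsum_insert fin_add)
lemma fin_W: "f \<in> W n \<Longrightarrow> finite (supp f)" by (simp add: W_iff)

fun wprod :: "(nat \<Rightarrow> ('a::field) walg) \<Rightarrow> nat list \<Rightarrow> 'a walg" where
  "wprod u [] = wconst 1"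
| "wprod u (a # w) = wmult (u a) (wprod u w)"

lemma wprod_append: "wprod u (v @ w) = wmult (wprod u v) (wprod u w)"
  by (induction v) (simp_all add: wmult_one_left wmult_assoc)

lemma W_wprod: "(\<And>i. i < n \<Longrightarrow> u i \<in> W n) \<Longrightarrow> set w \<subseteq> {..<n} \<Longrightarrow> wprod u w \<in> W n"
  by (induction w) (auto simp: W_const W_mult)

definition sub :: "(nat \<Rightarrow> ('a::field) walg) \<Rightarrow> 'a walg \<Rightarrow> 'a walg" where
  "sub u f = wsum (supp f) (\<lambda>w. wsmult (f w) (wprod u w))"

lemma sub_gen:
  assumes "finite S" "supp f \<subseteq> S"
  shows "sub u f = wsum S (\<lambda>w. wsmult (f w) (wprod u w))"
  unfolding sub_def wsum_def
proof
  fix x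
  show "(\<Sum>i\<in>supp f. wsmult (f i) (wprod u i) x) = (\<Sum>i\<in>S. wsmult (f i) (wprod u i) x)"
    by (rule sum.mono_neutral_left) (use assms in \<open>auto simp: supp_def wsmult_def\<close>)
qed

lemma sub_add:
  assumes "finite (supp f)" "finite (supp g)"
  shows "sub u (wadd f g) = wadd (sub u f) (sub u g)"
proof -
  let ?S = "supp f \<union> supp g"
  have "sub u (wadd f g) = wsum ?S (\<lambda>w. wsmult (wadd f g w) (wprod u w))"
    by (rule sub_gen) (use assms in \<open>auto simp: supp_def wadd_def\<close>)
  moreover have "sub u f = wsum ?S (\<lambda>w. wsmult (f w) (wprod u w))"
    by (rule sub_gen) (use assms in auto)
  moreover have "sub u g = wsum ?S (\<lambda>w. wsmult (g w) (wprod u w))"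
    by (rule sub_gen) (use assms in auto)
  ultimately show ?thesis
    by (simp add: wsum_def wadd_def wsmult_def distrib_right sum.distrib)
qed

lemma sub_smult:
  assumes "finite (supp f)"
  shows "sub u (wsmult c f) = wsmult c (sub u f)"
proof -
  have "sub u (wsmult c f) = wsum (supp f) (\<lambda>w. wsmult (wsmult c f w) (wprod u w))"
    by (rule sub_gen) (use assms in \<open>auto simp: supp_def wsmult_def\<close>)
  then show ?thesis
    by (simp add: sub_def wsum_def wsmult_def sum_distrib_left mult.assoc)
qed

lemma sub_zero: "sub u (\<lambda>_. 0) = (\<lambda>_. 0)"
  by (simp add: sub_def supp_def)

lemma sub_wsum:
  assumes "finite S" "\<And>i. i \<in> S \<Longrightarrow> finite (supp (F i))"
  shows "sub u (wsum S F) = wsum S (\<lambda>i. sub u (F i))"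
  using assms
proof (induction S rule: finite_induct)
  case empty then show ?case by (simp add: sub_zero)
next
  case (insert i S)
  then show ?case by (simp add: wsum_insert sub_add fin_wsum)
qed

lemma sub_ew: "sub u (ew w) = wprod u w"
  unfolding sub_def supp_ew by (simp add: wsum_def ew_def wsmult_def)

lemma sub_mult:
  assumes f: "finite (supp f)" and g: "finite (supp g)"
  shows "sub u (wmult f g) = wmult (sub u f) (sub u g)"
proof -
  have "sub u (wmult f g) = wsum (supp f \<times> supp g) (\<lambda>p. sub u (wsmult (f (fst p) * g (snd p)) (ew (fst p @ snd p))))"
    unfolding wmult_expand[OF f g]
    by (rule sub_wsum) (use f g in \<open>auto simp: fin_smult supp_ew\<close>)
  also have "\<dots> = wsum (supp f \<times> supp g) (\<lambda>p. wsmult (f (fst p) * g (snd p)) (wmult (wprod u (fst p)) (wprod u (snd p))))"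
    by (simp add: sub_smult supp_ew sub_ew wprod_append)
  also have "\<dots> = wsum (supp f) (\<lambda>a. wsum (supp g) (\<lambda>b. wsmult (f a * g b) (wmult (wprod u a) (wprod u b))))"
    by (rule wsum_cartesian[where F="\<lambda>a b. wsmult (f a * g b) (wmult (wprod u a) (wprod u b))"])
  also have "\<dots> = wmult (sub u f) (sub u g)"
    unfolding sub_def
    by (subst wsum_swap) (simp add: wmult_wsum_left wmult_wsum_right wmult_smult_left wmult_smult_right wsmult_smult mult.commute wsmult_wsum)
  finally show ?thesis .
qed

lemma fin_ew: "finite (supp (ew w))" by (simp add: supp_ew)

lemma sub_const: "sub u (wconst a) = wconst a"
  by (simp add: wconst_ew sub_smult fin_ew sub_ew)

lemma sub_var: "sub u (wvar i) = u i"
  by (simp add: wvar_ew sub_ew wmult_one_right)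

lemma sub_WEnd:
  assumes "\<And>i. i < n \<Longrightarrow> u i \<in> W n"
  shows "sub u \<in> WEnd n"
proof -
  have "sub u f \<in> W n" if "f \<in> W n" for f
    unfolding sub_def using that assms
    by (intro W_wsum W_smult W_wprod) (auto simp: W_iff)
  then show ?thesis
    unfolding WEnd_def by (auto simp: sub_add sub_smult sub_mult fin_W sub_const)
qed


lemma WEnd_W: "E \<in> WEnd n \<Longrightarrow> f \<in> W n \<Longrightarrow> E f \<in> W n" by (simp add: WEnd_def)
lemma WEnd_add: "E \<in> WEnd n \<Longrightarrow> f \<in> W n \<Longrightarrow> g \<in> W n \<Longrightarrow> E (wadd f g) = wadd (E f) (E g)" by (simp add: WEnd_def)
lemma WEnd_smult: "E \<in> WEnd n \<Longrightarrow> f \<in> W n \<Longrightarrow> E (wsmult c f) = wsmult c (E f)" by (simp add: WEnd_def)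
lemma WEnd_mult: "E \<in> WEnd n \<Longrightarrow> f \<in> W n \<Longrightarrow> g \<in> W n \<Longrightarrow> E (wmult f g) = wmult (E f) (E g)" by (simp add: WEnd_def)
lemma WEnd_one: "E \<in> WEnd n \<Longrightarrow> E (wconst 1) = wconst 1" by (simp add: WEnd_def)

lemma hom_zero: "E \<in> WEnd n \<Longrightarrow> E (\<lambda>_. 0) = (\<lambda>_. 0)"
proof -
  assume E: "E \<in> WEnd n"
  have "(\<lambda>_. 0) = wsmult 0 (wconst 1)" by (simp add: wsmult_def)
  moreover have "E (wsmult 0 (wconst 1)) = wsmult 0 (E (wconst 1))"
    using E W_const by (rule WEnd_smult)
  ultimately show ?thesis by (simp add: wsmult_def)
qed

lemma hom_wsum:
  assumes E: "E \<in> WEnd n" and "finite S" "\<And>i. i \<in> S \<Longrightarrow> F i \<in> W n"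
  shows "E (wsum S F) = wsum S (\<lambda>i. E (F i))"
  using assms(2,3)
proof (induction S rule: finite_induct)
  case empty then show ?case using hom_zero[OF E] by simp
next
  case (insert i S)
  have "wsum S F \<in> W n" using insert by (intro W_wsum) auto
  then show ?case using insert E by (simp add: wsum_insert WEnd_add)
qed

lemma hom_ew:
  assumes E: "E \<in> WEnd n" and F: "F \<in> WEnd n" and ag: "\<And>i. i < n \<Longrightarrow> E (wvar i) = F (wvar i)"
  shows "set w \<subseteq> {..<n} \<Longrightarrow> E (ew w) = F (ew w)"
proof (induction w)
  case Nil then show ?case using E F by (simp add: WEnd_one wconst1[symmetric])
next
  case (Cons a w)
  have eq: "ew (a # w) = wmult (wvar a) (ew w)" by (simp add: wvar_ew wmult_ew)
  have "wvar a \<in> W n" "ew w \<in> W n" using Cons.prems by (auto intro: W_var W_ew)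
  then have "E (wmult (wvar a) (ew w)) = wmult (E (wvar a)) (E (ew w))"
    "F (wmult (wvar a) (ew w)) = wmult (F (wvar a)) (F (ew w))"
    by (auto intro: WEnd_mult[OF E] WEnd_mult[OF F])
  then show ?case unfolding eq using Cons ag by simp
qed

lemma hom_uniq:
  assumes E: "E \<in> WEnd n" and F: "F \<in> WEnd n" and ag: "\<And>i. i < n \<Longrightarrow> E (wvar i) = F (wvar i)"
    and f: "f \<in> W n"
  shows "E f = F f"
proof -
  have fin: "finite (supp f)" and sw: "\<And>w. w \<in> supp f \<Longrightarrow> set w \<subseteq> {..<n}" using f by (auto simp: W_iff)
  have mem: "\<And>w. w \<in> supp f \<Longrightarrow> wsmult (f w) (ew w) \<in> W n" using sw by (intro W_smult W_ew) auto
  have "E f = wsum (supp f) (\<lambda>w. E (wsmult (f w) (ew w)))"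
    by (subst expansion[OF fin order_refl]) (rule hom_wsum[OF E fin mem])
  also have "\<dots> = wsum (supp f) (\<lambda>w. F (wsmult (f w) (ew w)))"
  proof (rule wsum_cong)
    fix w assume w: "w \<in> supp f"
    have "ew w \<in> W n" using sw[OF w] by (rule W_ew)
    then show "E (wsmult (f w) (ew w)) = F (wsmult (f w) (ew w))"
      using WEnd_smult[OF E] WEnd_smult[OF F] hom_ew[OF E F ag sw[OF w]] by metis
  qed
  also have "\<dots> = F f"
    by (subst (2) expansion[OF fin order_refl]) (rule hom_wsum[OF F fin mem, symmetric])
  finally show ?thesis .
qed

lemma conj_sub:
  fixes \<mu> :: "('a::field) walg \<Rightarrow> 'a walg"
  assumes bij: "bij_betw \<mu> (W n) (W n)"
    and conj: "\<forall>s\<in>WEnd n. (\<lambda>f. \<mu> (s (the_inv_into (W n) \<mu> f))) \<in> WEnd n"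
    and fixx: "\<forall>i<n. \<mu> (wvar i) = wvar i"
    and u: "\<And>i. i < n \<Longrightarrow> u i \<in> W n" and f: "f \<in> W n"
  shows "\<mu> (sub u f) = sub (\<lambda>i. \<mu> (u i)) (\<mu> f)"
proof -
  let ?E = "\<lambda>f. \<mu> (sub u (the_inv_into (W n) \<mu> f))"
  have "sub u \<in> WEnd n" by (rule sub_WEnd) (rule u)
  from bspec[OF conj this] have E: "?E \<in> WEnd n" .
  have F: "sub (\<lambda>i. \<mu> (u i)) \<in> WEnd n"
    using bij_betwE[OF bij] u by (intro sub_WEnd) blast
  have inj: "inj_on \<mu> (W n)" using bij by (simp add: bij_betw_def)
  have agree: "?E (wvar i) = sub (\<lambda>i. \<mu> (u i)) (wvar i)" if "i < n" for i
  proof -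
    have "the_inv_into (W n) \<mu> (wvar i) = wvar i"
      by (rule the_inv_into_f_eq[OF inj]) (use fixx that W_var in auto)
    then show ?thesis by (simp add: sub_var)
  qed
  have muf: "\<mu> f \<in> W n" using bij_betwE[OF bij] f by blast
  have "?E (\<mu> f) = sub (\<lambda>i. \<mu> (u i)) (\<mu> f)"
    by (rule hom_uniq[OF E F agree muf])
  moreover have "the_inv_into (W n) \<mu> (\<mu> f) = f" by (rule the_inv_into_f_f[OF inj f])
  ultimately show ?thesis by simp
qed


definition ev :: "('a::field) walg \<Rightarrow> 'a \<Rightarrow> 'a" where
  "ev f b = (\<Sum>w\<in>supp f. f w * b ^ length w)"

lemma wconst_mult: "wmult (wconst a) (wconst c) = wconst (a * c)"
  by (simp add: wconst_ew wmult_smult_left wmult_smult_right wmult_ew wsmult_smult mult.commute)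

lemma wprod_const: "wprod (\<lambda>_. wconst b) w = wconst (b ^ length w)"
  by (induction w) (simp_all add: wconst_mult)

lemma sub_const_fun: "sub (\<lambda>_. wconst b) f = wconst (ev f b)"
  unfolding sub_def ev_def wprod_const
  by (auto simp: wsum_def wsmult_def wconst_def sum_distrib_left intro!: ext)

lemma wconst_inj: "wconst a = wconst b \<Longrightarrow> a = b"
  by (metis wconst_def)

lemma pow_all_eq_1:
  assumes inf: "infinite (UNIV :: ('a::field) set)" and h: "\<forall>c::'a. c ^ k = c"
  shows "k = 1"
proof (rule ccontr)
  assume k: "k \<noteq> 1"
  show False
  proof (cases "k = 0")
    case True then show False using h[rule_format, of 0] by simp
  next
    case False
    let ?p = "monom (1::'a) k - monom 1 1"
    have "coeff ?p k = 1" using k by (simp add: coeff_monom)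
    then have "?p \<noteq> 0" by (metis coeff_0 zero_neq_one)
    then have "finite {x. poly ?p x = 0}" by (rule poly_roots_finite)
    moreover have "{x. poly ?p x = 0} = UNIV" using h by (auto simp: poly_monom)
    ultimately show False using inf by simp
  qed
qed

definition polyof :: "('a::field) walg \<Rightarrow> 'a poly" where
  "polyof f = (\<Sum>w\<in>supp f. monom (f w) (length w))"

lemma poly_polyof: "poly (polyof f) b = ev f b"
  by (simp add: polyof_def ev_def poly_sum poly_monom)

lemma coeff_polyof:
  assumes "\<forall>w\<in>supp f. set w \<subseteq> {0}" "finite (supp f)"
  shows "coeff (polyof f) k = f (replicate k 0)"
proof -
  have "coeff (polyof f) k = (\<Sum>w\<in>supp f. if w = replicate k 0 then f w else 0)"
    unfolding polyof_def coeff_sum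
  proof (intro sum.cong refl)
    fix w assume w: "w \<in> supp f"
    then have "w = replicate (length w) 0" using assms(1)
      by (metis replicate_length_same singletonD subset_eq)
    then show "coeff (monom (f w) (length w)) k = (if w = replicate k 0 then f w else 0)"
      by (metis coeff_monom length_replicate)
  qed
  also have "\<dots> = f (replicate k 0)"
    using assms(2) by (auto simp: supp_def)
  finally show ?thesis .
qed

lemma uni:
  assumes inf: "infinite (UNIV :: ('a::field) set)"
    and ff: "finite (supp f)" and fg: "finite (supp g)"
    and zf: "\<forall>w\<in>supp f. set w \<subseteq> {0}" and zg: "\<forall>w\<in>supp g. set w \<subseteq> {0}"
    and e: "\<And>b. ev f b = ev g (b::'a)"
  shows "f = g"
proof -
  let ?p = "polyof f - polyof g"
  have "{x. poly ?p x = 0} = UNIV" using e by (simp add: poly_polyof)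
  then have "?p = 0" using poly_roots_finite inf by (metis)
  then have pq: "polyof f = polyof g" by simp
  show ?thesis
  proof
    fix w
    show "f w = g w"
    proof (cases "set w \<subseteq> {0}")
      case True
      then have "w = replicate (length w) 0"
        by (metis replicate_length_same singletonD subset_eq)
      then show ?thesis using coeff_polyof[OF zf ff, of "length w"] coeff_polyof[OF zg fg, of "length w"] pq
        by metis
    next
      case False
      then have "w \<notin> supp f" "w \<notin> supp g" using zf zg by blast+
      then show ?thesis by (simp add: supp_def)
    qed
  qed
qed

lemma supp_wsum: "supp (wsum S F) \<subseteq> (\<Union>i\<in>S. supp (F i))"
  by (auto simp: supp_def wsum_def intro: ccontr)

lemma wprod_diag: "wprod (\<lambda>_. wvar 0) w = ew (replicate (length w) 0)"
  by (induction w) (simp_all add: wconst1 wvar_ew wmult_ew)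

lemma sub_diag_supp: "\<forall>w\<in>supp (sub (\<lambda>_. wvar 0) f). set w \<subseteq> {0}"
proof
  fix w assume "w \<in> supp (sub (\<lambda>_. wvar 0) f)"
  then obtain v where "w \<in> supp (wsmult (f v) (ew (replicate (length v) 0)))"
    using supp_wsum unfolding sub_def wprod_diag by blast
  then show "set w \<subseteq> {0}" by (auto simp: supp_def wsmult_def ew_def split: if_splits)
qed

lemma prod_list_map: "prod_list (map (\<lambda>i. if i = j then c else 1) w) = c ^ count_list w j"
  by (induction w) auto

lemma wprod_scale: "wprod (\<lambda>i. wsmult (d i) (wvar i)) w = wsmult (prod_list (map d w)) (ew w)"
  by (induction w) (simp_all add: wconst1 wvar_ew wmult_smult_left wmult_smult_right wmult_ew wsmult_smult mult.commute)

lemma sub_scale: "finite (supp f) \<Longrightarrow> sub (\<lambda>i. wsmult (d i) (wvar i)) f = (\<lambda>w. f w * prod_list (map d w))"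
proof
  fix x assume fin: "finite (supp f)"
  have "sub (\<lambda>i. wsmult (d i) (wvar i)) f x = (\<Sum>w\<in>supp f. if x = w then f w * prod_list (map d w) else 0)"
    unfolding sub_def wprod_scale wsum_def by (intro sum.cong) (auto simp: wsmult_def ew_def)
  also have "\<dots> = f x * prod_list (map d x)" using fin by (auto simp: supp_def)
  finally show "sub (\<lambda>i. wsmult (d i) (wvar i)) f x = f x * prod_list (map d x)" .
qed

lemma len_count: "set (w::nat list) \<subseteq> {0,1} \<Longrightarrow> length w = count_list w 0 + count_list w 1"
  by (induction w) auto

lemma word01:
  fixes w :: "nat list"
  assumes "set w \<subseteq> {..<n}" "count_list w 0 = 1" "count_list w 1 = 1"
    "\<And>j. 2 \<le> j \<Longrightarrow> j < n \<Longrightarrow> count_list w j = 0"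
  shows "w = [0,1] \<or> w = [1,0]"
proof -
  have s: "set w \<subseteq> {0,1}"
  proof
    fix x assume x: "x \<in> set w"
    then have "x < n" using assms(1) by auto
    moreover have "count_list w x \<noteq> 0" using x by (simp add: count_list_0_iff)
    ultimately show "x \<in> {0,1}" using assms(4)[of x] by fastforce
  qed
  then have "length w = 2" using len_count[OF s] assms(2,3) by simp
  then obtain a b where w: "w = [a,b]"
    by (metis (no_types) One_nat_def Suc_1 length_0_conv length_Suc_conv)
  show ?thesis using s assms(2,3) unfolding w by (auto split: if_splits)
qed

lemma sub_t:
  "sub u (wadd (wsmult \<beta> (ew [0,1])) (wsmult \<gamma> (ew [1,0]))) =
   wadd (wsmult \<beta> (wmult (u 0) (u 1))) (wsmult \<gamma> (wmult (u 1) (u 0)))"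
  by (simp add: sub_add sub_smult fin_smult fin_ew sub_ew wmult_one_right)


lemma wprod_cong: "(\<And>i. i \<in> set w \<Longrightarrow> u i = u' i) \<Longrightarrow> wprod u w = wprod u' w"
  by (induction w) auto

lemma sub_cong_W: "f \<in> W n \<Longrightarrow> (\<And>i. i < n \<Longrightarrow> u i = u' i) \<Longrightarrow> sub u f = sub u' f"
  unfolding sub_def
  by (rule wsum_cong, rule arg_cong[where f="wsmult _"], rule wprod_cong) (auto simp: W_iff)

lemma wadd_same: "wadd (wsmult a e) (wsmult b e) = wsmult (a + b) e"
  by (simp add: wadd_def wsmult_def distrib_right)

theorem lemma4p2:
  fixes n :: nat and \<mu> :: "('a::field) walg \<Rightarrow> 'a walg"
  assumes inf: "infinite (UNIV :: 'a set)"
    and bij: "bij_betw \<mu> (W n) (W n)"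
    and conj: "\<forall>s\<in>WEnd n. (\<lambda>f. \<mu> (s (the_inv_into (W n) \<mu> f))) \<in> WEnd n"
    and conj_inv: "\<forall>s\<in>WEnd n. (\<lambda>f. the_inv_into (W n) \<mu> (s (\<mu> f))) \<in> WEnd n"
    and fixc: "\<forall>a::'a. \<mu> (wconst a) = wconst a"
    and fixx: "\<forall>i<n. \<mu> (wvar i) = wvar i"
  shows "(\<forall>u\<in>W n. \<forall>v\<in>W n. \<mu> (wmult u v) = wmult (\<mu> u) (\<mu> v))
       \<or> (\<forall>u\<in>W n. \<forall>v\<in>W n. \<mu> (wmult u v) = wmult (\<mu> v) (\<mu> u))"
proof -
  have muW: "\<And>f. f \<in> W n \<Longrightarrow> \<mu> f \<in> W n" using bij_betwE[OF bij] by blast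
  note CS = conj_sub[OF bij conj fixx]
  have evfix: "ev (\<mu> f) b = ev f b" if f: "f \<in> W n" for f b
  proof -
    have "\<mu> (sub (\<lambda>_. wconst b) f) = sub (\<lambda>i. \<mu> (wconst b)) (\<mu> f)"
      by (rule CS) (auto simp: W_const f)
    then have "wconst (ev f b) = wconst (ev (\<mu> f) b)" using fixc by (simp add: sub_const_fun)
    then show ?thesis by (metis wconst_inj)
  qed
  show ?thesis
  proof (cases "n \<le> 1")
    case True
    have idW: "\<mu> f = f" if f: "f \<in> W n" for f
    proof (rule uni[OF inf])
      show "finite (supp (\<mu> f))" "finite (supp f)" using f muW[OF f] by (auto simp: W_iff)
      have "\<And>h. h \<in> W n \<Longrightarrow> \<forall>w\<in>supp h. set w \<subseteq> {0}" using True by (fastforce simp: W_iff)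
      then show "\<forall>w\<in>supp (\<mu> f). set w \<subseteq> {0}" "\<forall>w\<in>supp f. set w \<subseteq> {0}" using f muW[OF f] by auto
      show "\<And>b. ev (\<mu> f) b = ev f b" by (rule evfix[OF f])
    qed
    show ?thesis by (rule disjI1) (simp add: idW W_mult)
  next
    case False
    then have n2: "2 \<le> n" by simp
    have x0: "wvar 0 \<in> W n" and x1: "wvar 1 \<in> W n" using n2 by (auto intro: W_var)
    have A: "\<mu> (wsmult c (wvar 0)) = wsmult c (wvar 0)" for c
    proof -
      let ?g = "\<mu> (wsmult c (wvar 0))"
      have cx: "wsmult c (wvar 0) \<in> W n" using x0 by (rule W_smult)
      have s0: "sub (\<lambda>_. wvar 0) (wsmult c (wvar 0)) = wsmult c (wvar 0)"
        by (simp add: sub_smult wvar_ew fin_ew sub_ew wmult_one_right)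
      have "?g = sub (\<lambda>i. \<mu> (wvar 0)) ?g"
        using CS[of "\<lambda>_. wvar 0" "wsmult c (wvar 0)"] s0 x0 cx by simp
      then have "?g = sub (\<lambda>_. wvar 0) ?g" using fixx n2 by simp
      then have zg: "\<forall>w\<in>supp ?g. set w \<subseteq> {0}" by (metis sub_diag_supp)
      have zc: "\<forall>w\<in>supp (wsmult c (wvar 0)). set w \<subseteq> {0}"
        by (auto simp: supp_def wsmult_def wvar_def split: if_splits)
      show ?thesis
        by (rule uni[OF inf _ _ zg zc evfix[OF cx]]) (use cx muW[OF cx] in \<open>auto simp: W_iff\<close>)
    qed
    have A': "\<mu> (wsmult c (wvar i)) = wsmult c (wvar i)" if i: "i < n" for i c
    proof -
      have s: "sub (\<lambda>_. wvar i) (wsmult c (wvar 0)) = wsmult c (wvar i)"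
        by (simp add: sub_smult wvar_ew fin_ew sub_ew wmult_one_right)
      have "\<mu> (sub (\<lambda>_. wvar i) (wsmult c (wvar 0))) = sub (\<lambda>_. \<mu> (wvar i)) (\<mu> (wsmult c (wvar 0)))"
        by (rule CS) (auto intro: W_var W_smult x0 i)
      then show ?thesis using s A fixx i by simp
    qed
    have B: "\<mu> (wsmult c f) = wsmult c (\<mu> f)" if f: "f \<in> W n" for f c
    proof -
      have s: "sub (\<lambda>_. f) (wsmult c (wvar 0)) = wsmult c f"
        by (simp add: sub_smult wvar_ew fin_ew sub_ew wmult_one_right)
      have "\<mu> (sub (\<lambda>_. f) (wsmult c (wvar 0))) = sub (\<lambda>_. \<mu> f) (\<mu> (wsmult c (wvar 0)))"
        by (rule CS) (auto intro: W_smult x0 f)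
      also have "\<dots> = wsmult c (\<mu> f)"
        by (subst A) (simp add: sub_smult wvar_ew fin_ew sub_ew wmult_one_right)
      finally show ?thesis using s by simp
    qed
    define t where "t = \<mu> (ew [0,1])"
    have e01: "ew [0,1] \<in> W n" using n2 by (intro W_ew) auto
    have tW: "t \<in> W n" unfolding t_def by (rule muW[OF e01])
    have C1: "count_list w j = 0" if tw: "t w \<noteq> 0" and j: "2 \<le> j" "j < n" for w j
    proof -
      let ?d = "\<lambda>i. if i = j then (0::'a) else 1"
      let ?u = "\<lambda>i. wsmult (?d i) (wvar i)"
      have "sub ?u (ew [0,1]) = ew [0,1]"
        using j by (subst sub_scale[OF fin_ew]) (auto simp: ew_def intro!: ext)
      moreover have "\<mu> (sub ?u (ew [0,1])) = sub (\<lambda>i. \<mu> (?u i)) t"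
        unfolding t_def by (rule CS[OF _ e01]) (auto intro: W_var W_smult)
      moreover have "sub (\<lambda>i. \<mu> (?u i)) t = sub ?u t"
        by (rule sub_cong_W[OF tW]) (simp add: A')
      ultimately have "t = (\<lambda>w. t w * prod_list (map ?d w))"
        using tW by (simp add: t_def sub_scale fin_W)
      then have "t w = t w * 0 ^ count_list w j" by (metis prod_list_map)
      then show ?thesis using tw by (cases "count_list w j") auto
    qed
    have C2: "count_list w j = 1" if tw: "t w \<noteq> 0" and j: "j \<le> 1" for w j
    proof -
      have "c ^ count_list w j = c" for c :: 'a
      proof -
        let ?d = "\<lambda>i. if i = j then c else 1"
        let ?u = "\<lambda>i. wsmult (?d i) (wvar i)"
        have "sub ?u (ew [0,1]) = wsmult c (ew [0,1])"
          using j by (subst sub_scale[OF fin_ew]) (auto simp: ew_def wsmult_def intro!: ext)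
        moreover have "\<mu> (sub ?u (ew [0,1])) = sub (\<lambda>i. \<mu> (?u i)) t"
          unfolding t_def by (rule CS[OF _ e01]) (auto intro: W_var W_smult)
        moreover have "sub (\<lambda>i. \<mu> (?u i)) t = sub ?u t"
          by (rule sub_cong_W[OF tW]) (simp add: A')
        moreover have "\<mu> (wsmult c (ew [0,1])) = wsmult c t" unfolding t_def by (rule B[OF e01])
        ultimately have "wsmult c t = (\<lambda>w. t w * prod_list (map ?d w))"
          using tW by (simp add: sub_scale fin_W)
        then have "c * t w = t w * c ^ count_list w j" by (metis prod_list_map wsmult_def)
        then show ?thesis using tw by (metis mult.commute mult_right_cancel)
      qed
      then show ?thesis using pow_all_eq_1[OF inf] by blast
    qed
    have C3: "w = [0,1] \<or> w = [1,0]" if tw: "t w \<noteq> 0" for w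
    proof (rule word01)
      show "set w \<subseteq> {..<n}" using tW tw by (auto simp: W_def)
    qed (use C1 C2 tw in auto)
    define \<beta> where "\<beta> = t [0,1]"
    define \<gamma> where "\<gamma> = t [1,0]"
    have tform: "t = wadd (wsmult \<beta> (ew [0,1])) (wsmult \<gamma> (ew [1,0]))"
    proof
      fix w
      show "t w = wadd (wsmult \<beta> (ew [0,1])) (wsmult \<gamma> (ew [1,0])) w"
        using C3[of w] by (cases "t w = 0") (auto simp: wadd_def wsmult_def ew_def \<beta>_def \<gamma>_def)
    qed
    have D: "\<beta> + \<gamma> = 1"
    proof -
      have "sub (\<lambda>_. wconst 1) (ew [0,1]) = (wconst 1 :: 'a walg)"
        by (simp add: sub_ew wprod_const)
      then have "wconst 1 = sub (\<lambda>i. \<mu> (wconst 1)) t"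
        using CS[OF _ e01, of "\<lambda>_. wconst 1"] fixc by (simp add: W_const t_def)
      also have "\<dots> = wadd (wsmult \<beta> (wconst 1)) (wsmult \<gamma> (wconst 1))"
        unfolding tform sub_t using fixc by (simp add: wconst_mult)
      finally have "wconst 1 [] = wadd (wsmult \<beta> (wconst 1)) (wsmult \<gamma> (wconst (1::'a))) []"
        by simp
      then show ?thesis by (simp add: wadd_def wsmult_def wconst_def)
    qed
    have m11: "\<mu> (ew [1,1]) = ew [1,1]"
    proof -
      have "sub (\<lambda>_. wvar 1) (ew [0,1]) = (ew [1,1] :: 'a walg)"
        by (simp add: sub_ew wmult_one_right wvar_ew wmult_ew)
      then have "\<mu> (ew [1,1]) = sub (\<lambda>i. \<mu> (wvar 1)) t"
        using CS[OF _ e01, of "\<lambda>_. wvar 1"] x1 by (simp add: t_def)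
      also have "\<dots> = wsmult (\<beta> + \<gamma>) (ew [1,1])"
        unfolding tform sub_t using fixx n2 by (simp add: wvar_ew wmult_ew wadd_same)
      finally show ?thesis using D by simp
    qed
    have E: "\<beta> * \<beta> = \<beta>"
    proof -
      let ?U1 = "\<lambda>i. if i = 0 then ew [0,1] else wvar i"
      let ?U2 = "\<lambda>i. if i = 1 then ew [1,1] else wvar i"
      have U1: "\<And>i. i < n \<Longrightarrow> ?U1 i \<in> W n" using e01 by (auto intro: W_var)
      have e11: "ew [1,1] \<in> W n" using n2 by (intro W_ew) auto
      have U2: "\<And>i. i < n \<Longrightarrow> ?U2 i \<in> W n" using e11 by (auto intro: W_var)
      have s1: "sub ?U1 (ew [0,1]) = (ew [0,1,1] :: 'a walg)"
        by (simp add: sub_ew wmult_one_right wvar_ew wmult_ew)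
      have s2: "sub ?U2 (ew [0,1]) = (ew [0,1,1] :: 'a walg)"
        by (simp add: sub_ew wmult_one_right wvar_ew wmult_ew)
      have "\<mu> (sub ?U1 (ew [0,1])) = sub (\<lambda>i. \<mu> (?U1 i)) (\<mu> (ew [0,1]))"
        by (rule CS[OF _ e01]) (rule U1)
      then have "\<mu> (ew [0,1,1]) = sub (\<lambda>i. \<mu> (?U1 i)) t"
        using s1 by (simp add: t_def)
      also have "\<dots> = wadd (wsmult \<beta> (wmult t (wvar 1))) (wsmult \<gamma> (wmult (wvar 1) t))"
        by (subst (1) tform, unfold sub_t) (use fixx n2 in \<open>simp add: t_def\<close>)
      finally have 1: "\<mu> (ew [0,1,1]) [0,1,1] = \<beta> * \<beta>"
        unfolding tform
        by (simp add: wmult_add_left wmult_add_right wmult_smult_left wmult_smult_right wvar_ew wmult_ew)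
           (simp add: wadd_def wsmult_def ew_def)
      have "\<mu> (sub ?U2 (ew [0,1])) = sub (\<lambda>i. \<mu> (?U2 i)) (\<mu> (ew [0,1]))"
        by (rule CS[OF _ e01]) (rule U2)
      then have "\<mu> (ew [0,1,1]) = sub (\<lambda>i. \<mu> (?U2 i)) t"
        using s2 by (simp add: t_def)
      also have "\<dots> = wadd (wsmult \<beta> (wmult (wvar 0) (ew [1,1]))) (wsmult \<gamma> (wmult (ew [1,1]) (wvar 0)))"
        unfolding tform sub_t using fixx n2 m11 by simp
      finally have 2: "\<mu> (ew [0,1,1]) [0,1,1] = \<beta>"
        by (simp add: wvar_ew wmult_ew) (simp add: wadd_def wsmult_def ew_def)
      show ?thesis using 1 2 by simp
    qed
    have \<gamma>: "\<gamma> = 1 - \<beta>" using D by (simp add: algebra_simps)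
    have main: "\<mu> (wmult u v) = wadd (wsmult \<beta> (wmult (\<mu> u) (\<mu> v))) (wsmult \<gamma> (wmult (\<mu> v) (\<mu> u)))"
      if u: "u \<in> W n" and v: "v \<in> W n" for u v
    proof -
      let ?U = "\<lambda>i. if i = 0 then u else if i = 1 then v else wvar i"
      have U: "\<And>i. i < n \<Longrightarrow> ?U i \<in> W n" using u v by (auto intro: W_var)
      have s: "sub ?U (ew [0,1]) = wmult u v"
        by (simp add: sub_ew wmult_one_right)
      have "\<mu> (sub ?U (ew [0,1])) = sub (\<lambda>i. \<mu> (?U i)) (\<mu> (ew [0,1]))"
        by (rule CS[OF _ e01]) (rule U)
      then have "\<mu> (wmult u v) = sub (\<lambda>i. \<mu> (?U i)) t"
        using s by (simp add: t_def)
      also have "\<dots> = wadd (wsmult \<beta> (wmult (\<mu> u) (\<mu> v))) (wsmult \<gamma> (wmult (\<mu> v) (\<mu> u)))"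
        unfolding tform sub_t by simp
      finally show ?thesis .
    qed
    from E have "\<beta> = 0 \<or> \<beta> = 1"
      by (metis mult_cancel_right1 mult_zero_left)
    then show ?thesis
    proof
      assume "\<beta> = 1"
      then have "\<gamma> = 0" using \<gamma> by simp
      then show ?thesis using \<open>\<beta> = 1\<close> main by (intro disjI1) (simp add: wadd_def wsmult_def)
    next
      assume "\<beta> = 0"
      then have "\<gamma> = 1" using \<gamma> by simp
      then show ?thesis using \<open>\<beta> = 0\<close> main by (intro disjI2) (simp add: wadd_def wsmult_def)
    qed
  qed
qed

end
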